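(* Let $I$ be a proper ideal of $\mathbb{C}[\mathrm{GL}_n]$ and $Y = V(I)$. For $P(t),Q(t)\in\mathrm{GL}_n(\mathcal{R})$ let $Y_{P(t),Q(t)} = V(\Psi_{P(t),Q(t)}(I))\subset(\overline{\mathcal{K}}^* )^n$. Then \[\mathrm{strop}(Y) = \overline{\bigcup_{(P(t),Q(t))\in\mathrm{GL}_n(\mathcal{R})\times\mathrm{GL}_n(\mathcal{R})}\mathrm{trop}(Y_{P(t),Q(t)})}.\]
   Context: $\mathbb{C}[\mathrm{GL}_n]$ is the ring of regular functions on $\mathrm{GL}_n(\mathbb{C})$. $\overline{\mathcal{K}}$ is the field of complex Puiseux series with valuation $\mathrm{val}(\sum a_qt^q) = \min\{q:a_q\ne0\}$; $\mathcal{R} = \{z:\mathrm{val}(z)\ge0\}$. For $f\in\mathbb{C}[\mathrm{GL}_n]$ and $P(t),Q(t)\in\mathrm{GL}_n(\mathcal{R})$, $\Psi_{P(t),Q(t)}(f)$ is the Laurent polynomial over $\overline{\mathcal{K}}$ given by $z(t)\mapsto f(P(t)\,\mathrm{diag}(z(t))\,Q(t)^{-1})$, and $\Psi_{P,Q}(I) = \{\Psi_{P,Q}(f):f\in I\}$; $V(\cdot)\subset(\overline{\mathcal{K}}^* )^n$ is the common zero set. For $Z\subset(\overline{\mathcal{K}}^* )^n$, $\mathrm{trop}(Z)$ is the closure in $\mathbb{R}^n$ of $\{(\mathrm{val}(z_1),\dots,\mathrm{val}(z_n)) : z\in Z\}$. Every $A(t)\in\mathrm{GL}_n(\overline{\mathcal{K}})$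 factors as $P(t)\,\mathrm{diag}(z(t))\,Q(t)^{-1}$ with $P,Q\in\mathrm{GL}_n(\mathcal{R})$, the multiset $\{\mathrm{val}(z_i(t))\}$ being independent of the choice; $\mathrm{sval}(A(t))$ is this multiset in $\mathbb{Q}^n/\mathcal{S}_n$. $Y(\overline{\mathcal{K}})$ is the set of $A(t)\in\mathrm{GL}_n(\overline{\mathcal{K}})$ on which all $f\in I$ vanish, and $\mathrm{strop}(Y)$ is the closure in $\mathbb{R}^n$ of the set of $x\in\mathbb{Q}^n$ whose $\mathcal{S}_n$-orbit equals $\mathrm{sval}(A(t))$ for some $A(t)\in Y(\overline{\mathcal{K}})$. *)

theory Defs
  imports "HOL-Analysis.Analysis" "HOL-Computational_Algebra.Formal_Laurent_Series"
          "HOL-Library.Poly_Mapping" "HOL-Library.Multiset"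
begin

no_notation fps_nth (infixl \<open>$\<close> 75)

text \<open>An element of C((t^(1/N))) (level N, N >= 1) is represented by a complex formal
Laurent series f in the variable s = t^(1/N); i.e. f represents sum_k f_k t^(k/N).
The field of Puiseux series is the direct limit (union) of these levels along the
maps lift M : C((t^(1/N))) -> C((t^(1/(N*M)))), s |-> s^M.\<close>

definition lift :: "nat \<Rightarrow> complex fls \<Rightarrow> complex fls" where
  "lift M f = Abs_fls (\<lambda>k. if int M dvd k then fls_nth f (k div int M) else 0)"

definition lift_mat :: "nat \<Rightarrow> complex fls ^'n^'m \<Rightarrow> complex fls ^'n^'m" where
  "lift_mat M A = (\<chi> i j. lift M (A $ i $ j))"

definition val_lvl :: "nat \<Rightarrow> complex fls \<Rightarrow> real" where
  "val_lvl N f = real_of_int (fls_subdegree f) / real N"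

definition in_R :: "complex fls \<Rightarrow> bool" where
  "in_R f \<longleftrightarrow> f = 0 \<or> fls_subdegree f \<ge> 0"

definition GL_R :: "(complex fls ^'n^'n) set" where
  "GL_R = {A. (\<forall>i j. in_R (A $ i $ j)) \<and>
              (\<exists>B. (\<forall>i j. in_R (B $ i $ j)) \<and> A ** B = mat 1 \<and> B ** A = mat 1)}"

definition diagm :: "'a::zero ^'n \<Rightarrow> 'a ^'n^'n" where
  "diagm z = (\<chi> i j. if i = j then z $ i else 0)"

type_synonym 'n mpoly = "(('n \<times> 'n) \<Rightarrow>\<^sub>0 nat) \<Rightarrow>\<^sub>0 complex"

definition peval :: "(complex \<Rightarrow> 'a::comm_ring_1) \<Rightarrow> 'n mpoly \<Rightarrow> 'a^'n^'n \<Rightarrow> 'a" where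
  "peval emb p A = (\<Sum>mo\<in>Poly_Mapping.keys p. emb (Poly_Mapping.lookup p mo) *
      (\<Prod>ij\<in>Poly_Mapping.keys mo. (A $ fst ij $ snd ij) ^ Poly_Mapping.lookup mo ij))"

definition represents :: "(complex^'n^'n \<Rightarrow> complex) \<Rightarrow> 'n mpoly \<Rightarrow> nat \<Rightarrow> bool" where
  "represents f p k \<longleftrightarrow> (\<forall>A. det A \<noteq> 0 \<longrightarrow> f A = peval id p A / det A ^ k)"

text \<open>C[GL_n]: the ring (under pointwise operations) of regular functions on GL_n(C);
normalised to be 0 off GL_n(C).\<close>
definition regfun :: "(complex^'n^'n \<Rightarrow> complex) set" where
  "regfun = {f. (\<exists>p k. represents f p k) \<and> (\<forall>A. det A = 0 \<longrightarrow> f A = 0)}"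

definition is_ideal :: "(complex^'n^'n \<Rightarrow> complex) set \<Rightarrow> bool" where
  "is_ideal I \<longleftrightarrow> I \<subseteq> regfun \<and> (\<lambda>_. 0) \<in> I \<and>
     (\<forall>f\<in>I. \<forall>g\<in>I. (\<lambda>A. f A + g A) \<in> I) \<and>
     (\<forall>f\<in>I. \<forall>g\<in>regfun. (\<lambda>A. g A * f A) \<in> I)"

definition proper_ideal :: "(complex^'n^'n \<Rightarrow> complex) set \<Rightarrow> bool" where
  "proper_ideal I \<longleftrightarrow> is_ideal I \<and> I \<noteq> regfun"

definition regext :: "(complex^'n^'n \<Rightarrow> complex) \<Rightarrow> complex fls^'n^'n \<Rightarrow> complex fls" where
  "regext f A = (let (p, k) = (SOME (p, k). represents f p k)
                 in peval fls_const p A / det A ^ k)"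

text \<open>trop(Y_{P,Q}) for P, Q in GL_n(R) given at level N: closure of the valuation vectors
of points z in (K^*)^n (taken at any finer level N*M) with Psi_{P,Q}(f)(z) = 0 for all f in I.\<close>
definition trop_PQ :: "(complex^'n^'n \<Rightarrow> complex) set \<Rightarrow> nat \<Rightarrow>
     complex fls^'n^'n \<Rightarrow> complex fls^'n^'n \<Rightarrow> (real^'n) set" where
  "trop_PQ I N P Q = closure {x. \<exists>M z. M > 0 \<and> (\<forall>i. z $ i \<noteq> 0) \<and>
      (\<forall>f\<in>I. regext f (lift_mat M P ** diagm z ** matrix_inv (lift_mat M Q)) = 0) \<and>
      (\<forall>i. x $ i = val_lvl (N * M) (z $ i))}"

definition mset_vec :: "'a^'n::finite \<Rightarrow> 'a multiset" where
  "mset_vec x = image_mset (\<lambda>i. x $ i) (mset_set UNIV)"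

text \<open>x (as an S_n-orbit) equals sval(A) for A of level N: there is a factorisation
A = P diag(z) Q^{-1} with P, Q in GL_n(R) (at some finer level N*M) whose valuation
multiset is that of x.\<close>
definition is_sval :: "nat \<Rightarrow> complex fls^'n^'n \<Rightarrow> real^'n \<Rightarrow> bool" where
  "is_sval N A x \<longleftrightarrow> (\<exists>M P Q z. M > 0 \<and> P \<in> GL_R \<and> Q \<in> GL_R \<and> (\<forall>i. z $ i \<noteq> 0) \<and>
      lift_mat M A = P ** diagm z ** matrix_inv Q \<and>
      mset_vec x = image_mset (val_lvl (N * M)) (mset_vec z))"

definition strop :: "(complex^'n^'n \<Rightarrow> complex) set \<Rightarrow> (real^'n) set" where
  "strop I = closure {x. (\<forall>i. x $ i \<in> \<rat>) \<and>
      (\<exists>N A. N > 0 \<and> det A \<noteq> 0 \<and> (\<forall>f\<in>I. regext f A = 0) \<and> is_sval N A x)}"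

end

theory Submission
  imports Defs "HOL-Combinatorics.Permutations"
begin

lemma lift_eq: "M > 0 \<Longrightarrow> lift M f = fls_compose_power f M"
proof -
  assume M: "M > 0"
  have "fls_compose_power f M = Abs_fls (fls_nth (fls_compose_power f M))"
    by (simp add: fls_nth_inverse)
  also have "fls_nth (fls_compose_power f M) = (\<lambda>k. if int M dvd k then fls_nth f (k div int M) else 0)"
    using M by (simp add: fls_nth_compose_power fun_eq_iff)
  finally show ?thesis unfolding lift_def by simp
qed

lemma lift_add: "M > 0 \<Longrightarrow> lift M (a + b) = lift M a + lift M b"
  by (simp add: lift_eq)
lemma lift_mult: "M > 0 \<Longrightarrow> lift M (a * b) = lift M a * lift M b"
  by (simp add: lift_eq)
lemma lift_0: "M > 0 \<Longrightarrow> lift M 0 = 0"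
  by (simp add: lift_eq)
lemma lift_1: "M > 0 \<Longrightarrow> lift M 1 = 1"
  by (simp add: lift_eq)
lemma lift_const: "M > 0 \<Longrightarrow> lift M (fls_const c) = fls_const c"
  by (simp add: lift_eq)
lemma lift_uminus: "M > 0 \<Longrightarrow> lift M (- a) = - lift M a"
  by (simp add: lift_eq)
lemma lift_power: "M > 0 \<Longrightarrow> lift M (a ^ k) = lift M a ^ k"
  by (simp add: lift_eq)

lemma lift_nth: "M > 0 \<Longrightarrow> fls_nth (lift M f) (int M * k) = fls_nth f k"
  by (simp add: lift_eq fls_nth_compose_power)

lemma lift_inj: "M > 0 \<Longrightarrow> lift M f = 0 \<Longrightarrow> f = 0"
  by (metis fls_eqI fls_zero_nth lift_nth)

lemma lift_divide: "M > 0 \<Longrightarrow> lift M (a / b) = lift M a / lift M b"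
proof (cases "b = 0")
  case True
  assume "M > 0" thus ?thesis using True by (simp add: lift_0)
next
  case False
  assume M: "M > 0"
  have nz: "lift M b \<noteq> 0" using lift_inj[OF M] False by blast
  have e: "a = a / b * b" using False by simp
  have "lift M a = lift M (a / b) * lift M b" by (metis e lift_mult M)
  then show ?thesis using nz by (simp add: field_simps)
qed

lemma lift_sum: "M > 0 \<Longrightarrow> lift M (sum g S) = (\<Sum>x\<in>S. lift M (g x))"
  by (induction S rule: infinite_finite_induct) (auto simp: lift_0 lift_add)

lemma lift_prod: "M > 0 \<Longrightarrow> lift M (prod g S) = (\<Prod>x\<in>S. lift M (g x))"
  by (induction S rule: infinite_finite_induct) (auto simp: lift_1 lift_mult)

lemma lift_one_id: "lift 1 f = f"
proof -
  have "lift 1 f = fls_compose_power f 1" by (rule lift_eq) simp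
  also have "\<dots> = f" by (rule fls_eqI) (simp add: fls_nth_compose_power)
  finally show ?thesis .
qed

lemma lift_of_int: "M > 0 \<Longrightarrow> lift M (of_int c) = of_int c"
  by (simp add: fls_of_int lift_const)

lemma lift_mat_one_id: "lift_mat 1 A = A"
  unfolding lift_mat_def lift_one_id by simp

lemma lift_mat_mult: "M > 0 \<Longrightarrow> lift_mat M (A ** B) = lift_mat M A ** lift_mat M B"
  by (simp add: lift_mat_def matrix_matrix_mult_def lift_sum lift_mult vec_eq_iff)

lemma lift_mat_mat1: "M > 0 \<Longrightarrow> lift_mat M (mat 1) = mat 1"
  by (simp add: lift_mat_def mat_def lift_0 lift_1 vec_eq_iff)

lemma lift_det: "M > 0 \<Longrightarrow> lift M (det A) = det (lift_mat M A)"
  unfolding det_def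
  by (simp add: lift_sum lift_mult lift_prod lift_mat_def lift_of_int)

lemma lift_peval: "M > 0 \<Longrightarrow> lift M (peval fls_const p A) = peval fls_const p (lift_mat M A)"
  unfolding peval_def
  by (simp add: lift_sum lift_mult lift_prod lift_mat_def lift_const lift_power)

lemma regext_lift: "M > 0 \<Longrightarrow> regext f (lift_mat M A) = lift M (regext f A)"
proof -
  assume M: "M > 0"
  obtain p k where pk: "(SOME (p, k). represents f p k) = (p, k)" by (cases "SOME (p, k). represents f p k") auto
  show ?thesis unfolding regext_def pk
    by (simp add: lift_divide M lift_peval lift_power lift_det)
qed

lemma in_R_lift: "M > 0 \<Longrightarrow> in_R f \<Longrightarrow> in_R (lift M f)"
  unfolding in_R_def
proof (elim disjE)
  assume M: "M > 0"
  { assume "f = 0" thus "lift M f = 0 \<or> 0 \<le> fls_subdegree (lift M f)" by (simp add: lift_0 M) }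
  assume s: "0 \<le> fls_subdegree f"
  have "0 \<le> fls_subdegree (lift M f)"
  proof (rule fls_subdegree_ge0I)
    fix k :: int assume k: "k < 0"
    show "fls_nth (lift M f) k = 0"
    proof (cases "int M dvd k")
      case True
      then obtain j where j: "k = int M * j" by blast
      with k M have "j < 0" by (simp add: mult_less_0_iff)
      hence "fls_nth f j = 0" using s by (metis fls_subdegree_leI not_le order.strict_trans2)
      thus ?thesis using j lift_nth[OF M] by simp
    next
      case False thus ?thesis using M by (simp add: lift_eq fls_nth_compose_power)
    qed
  qed
  thus "lift M f = 0 \<or> 0 \<le> fls_subdegree (lift M f)" by simp
qed

lemma matrix_inv_eq:
  fixes A B :: "'a::semiring_1^'n^'n"
  assumes "A ** B = mat 1" "B ** A = mat 1"
  shows "matrix_inv A = B"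
proof -
  have ex: "\<exists>B'. A ** B' = mat 1 \<and> B' ** A = mat 1" using assms by blast
  define C where "C = matrix_inv A"
  have C: "A ** C = mat 1 \<and> C ** A = mat 1"
    unfolding C_def matrix_inv_def by (rule someI_ex[OF ex])
  have "C = C ** (A ** B)" using assms by (simp add: matrix_mul_rid)
  also have "\<dots> = (C ** A) ** B" by (simp add: matrix_mul_assoc)
  also have "\<dots> = B" using C by (simp add: matrix_mul_lid)
  finally show ?thesis unfolding C_def .
qed

lemma GL_R_lift: "M > 0 \<Longrightarrow> P \<in> GL_R \<Longrightarrow> lift_mat M P \<in> GL_R \<and> lift_mat M P ** lift_mat M (matrix_inv P) = mat 1
   \<and> lift_mat M (matrix_inv P) ** lift_mat M P = mat 1"
proof -
  assume M: "M > 0" and P: "P \<in> GL_R"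
  then obtain B where B: "\<forall>i j. in_R (B $ i $ j)" "P ** B = mat 1" "B ** P = mat 1"
    and PR: "\<forall>i j. in_R (P $ i $ j)" unfolding GL_R_def by blast
  have inv: "matrix_inv P = B" using B matrix_inv_eq by blast
  have 1: "lift_mat M P ** lift_mat M B = mat 1" "lift_mat M B ** lift_mat M P = mat 1"
    using B by (simp_all add: lift_mat_mult[OF M, symmetric] lift_mat_mat1 M)
  show ?thesis unfolding GL_R_def inv using 1 B PR in_R_lift[OF M]
    by (auto simp: lift_mat_def intro!: exI[of _ "lift_mat M B"])
qed

definition pmat :: "('n \<Rightarrow> 'n) \<Rightarrow> complex fls^'n^'n" where
  "pmat \<sigma> = (\<chi> i j. if i = \<sigma> j then 1 else 0)"

lemma pmat_right: "(P ** pmat \<sigma>) $ i $ j = P $ i $ (\<sigma> j)"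
  by (simp add: pmat_def matrix_matrix_mult_def mult_if_delta if_distrib[of "\<lambda>x. _ * x"] cong: if_cong)

lemma pmat_tleft: "(transpose (pmat \<sigma>) ** B) $ i $ j = B $ (\<sigma> i) $ j"
  by (simp add: pmat_def transpose_def matrix_matrix_mult_def if_distrib[of "\<lambda>x. x * _"] cong: if_cong)

lemma pmat_tp: "bij \<sigma> \<Longrightarrow> transpose (pmat \<sigma>) ** pmat \<sigma> = mat 1"
  apply (simp only: vec_eq_iff pmat_tleft)
  by (simp add: pmat_def mat_def bij_def inj_eq)

lemma pmat_pt: "bij \<sigma> \<Longrightarrow> pmat \<sigma> ** transpose (pmat \<sigma>) = mat 1"
proof -
  assume b: "bij \<sigma>"
  have e: "\<And>i k. (i = \<sigma> k) = (k = inv \<sigma> i)" using b by (metis bij_inv_eq_iff)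
  show ?thesis
    by (simp add: vec_eq_iff pmat_def transpose_def mat_def matrix_matrix_mult_def e
        if_distrib[of "\<lambda>x. x * _"] cong: if_cong) (metis b bij_inv_eq_iff)
qed

lemma pmat_pt_assoc: "bij \<sigma> \<Longrightarrow> pmat \<sigma> ** (transpose (pmat \<sigma>) ** X) = X"
  by (metis matrix_mul_assoc pmat_pt matrix_mul_lid)

lemma diag_perm: "bij \<sigma> \<Longrightarrow> transpose (pmat \<sigma>) ** diagm z ** pmat \<sigma> = diagm (\<chi> i. z $ (\<sigma> i))"
  by (simp add: vec_eq_iff pmat_right pmat_tleft diagm_def bij_def inj_eq)

lemma GL_R_perm: "P \<in> GL_R \<Longrightarrow> bij \<sigma> \<Longrightarrow> P ** pmat \<sigma> \<in> GL_R"
proof -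
  assume P: "P \<in> GL_R" and b: "bij \<sigma>"
  then obtain B where B: "\<forall>i j. in_R (B $ i $ j)" "P ** B = mat 1" "B ** P = mat 1"
    and PR: "\<forall>i j. in_R (P $ i $ j)" unfolding GL_R_def by blast
  have 1: "(P ** pmat \<sigma>) ** (transpose (pmat \<sigma>) ** B) = mat 1"
    using B b by (metis matrix_mul_assoc pmat_pt_assoc)
  have 2: "(transpose (pmat \<sigma>) ** B) ** (P ** pmat \<sigma>) = mat 1"
    using B b by (simp add: matrix_mul_assoc[symmetric] pmat_tp) (simp add: matrix_mul_assoc matrix_mul_lid pmat_tp)
  show ?thesis unfolding GL_R_def using 1 2 B PR
    by (auto simp: pmat_right pmat_tleft intro!: exI[of _ "transpose (pmat \<sigma>) ** B"])
qed

lemma det_diagm_nz: "(\<forall>i. z $ i \<noteq> 0) \<Longrightarrow> det (diagm (z :: complex fls^'n)) \<noteq> 0"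
  by (subst det_diagonal) (auto simp: diagm_def)

lemma inv_det_nz: "(A :: complex fls^'n^'n) ** B = mat 1 \<Longrightarrow> det A \<noteq> 0"
  by (metis det_I det_mul mult_zero_left zero_neq_one)

theorem mainTheorem17:
  fixes I :: "(complex^'n^'n \<Rightarrow> complex) set"
  assumes "proper_ideal I"
  shows "strop I = closure (\<Union>N\<in>{N. N > 0}. \<Union>P\<in>GL_R. \<Union>Q\<in>GL_R. trop_PQ I N P Q)"
proof
  define S where "S = {x :: real^'n. (\<forall>i. x $ i \<in> \<rat>) \<and>
      (\<exists>N A. N > 0 \<and> det A \<noteq> 0 \<and> (\<forall>f\<in>I. regext f A = 0) \<and> is_sval N A x)}"
  have strop_eq: "strop I = closure S" unfolding S_def strop_def by simp
  have sub2: "trop_PQ I N P Q \<subseteq> strop I" if N: "N > 0" and P: "P \<in> GL_R" and Q: "Q \<in> GL_R" for N P Q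
  proof -
    have "{x. \<exists>M z. M > 0 \<and> (\<forall>i. z $ i \<noteq> 0) \<and>
      (\<forall>f\<in>I. regext f (lift_mat M P ** diagm z ** matrix_inv (lift_mat M Q)) = 0) \<and>
      (\<forall>i. x $ i = val_lvl (N * M) (z $ i))} \<subseteq> S"
    proof
      fix x assume "x \<in> {x. \<exists>M z. M > 0 \<and> (\<forall>i. z $ i \<noteq> 0) \<and>
        (\<forall>f\<in>I. regext f (lift_mat M P ** diagm z ** matrix_inv (lift_mat M Q)) = 0) \<and>
        (\<forall>i. x $ i = val_lvl (N * M) (z $ i))}"
      then obtain M z where M: "M > 0" and z: "\<forall>i. z $ i \<noteq> 0"
        and van: "\<forall>f\<in>I. regext f (lift_mat M P ** diagm z ** matrix_inv (lift_mat M Q)) = 0"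
        and xv: "\<forall>i. x $ i = val_lvl (N * M) (z $ i)" by blast
      define P' where "P' = lift_mat M P"
      define Q' where "Q' = lift_mat M Q"
      define B where "B = P' ** diagm z ** matrix_inv Q'"
      have gp: "P' \<in> GL_R" "P' ** lift_mat M (matrix_inv P) = mat 1"
        using GL_R_lift[OF M P] unfolding P'_def by auto
      have gq: "Q' \<in> GL_R" "Q' ** lift_mat M (matrix_inv Q) = mat 1"
        "lift_mat M (matrix_inv Q) ** Q' = mat 1"
        using GL_R_lift[OF M Q] unfolding Q'_def by auto
      have qi: "matrix_inv Q' = lift_mat M (matrix_inv Q)" using gq matrix_inv_eq by blast
      have "det B \<noteq> 0" unfolding B_def qi det_mul
        using inv_det_nz[OF gp(2)] inv_det_nz[OF gq(3)] det_diagm_nz[OF z] by simp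
      moreover have "is_sval (N * M) B x"
      proof -
        have 1: "lift_mat 1 B = P' ** diagm z ** matrix_inv Q'" by (simp only: lift_mat_one_id B_def)
        have 2: "mset_vec x = image_mset (val_lvl (N * M * 1)) (mset_vec z)"
          unfolding mset_vec_def multiset.map_comp using xv by (auto intro!: image_mset_cong)
        show ?thesis unfolding is_sval_def using 1 2 gp gq z
          by (metis less_numeral_extra(1))
      qed
      moreover have "\<forall>i. x $ i \<in> \<rat>" using xv by (simp add: val_lvl_def)
      ultimately show "x \<in> S" unfolding S_def using van N M
        by (auto simp: B_def P'_def Q'_def intro!: exI[of _ "N * M"] exI[of _ B])
    qed
    hence "closure {x. \<exists>M z. M > 0 \<and> (\<forall>i. z $ i \<noteq> 0) \<and>
      (\<forall>f\<in>I. regext f (lift_mat M P ** diagm z ** matrix_inv (lift_mat M Q)) = 0) \<and>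
      (\<forall>i. x $ i = val_lvl (N * M) (z $ i))} \<subseteq> closure S" by (rule closure_mono)
    thus ?thesis unfolding trop_PQ_def strop_eq .
  qed
  show "closure (\<Union>N\<in>{N. N > 0}. \<Union>P\<in>GL_R. \<Union>Q\<in>GL_R. trop_PQ I N P Q) \<subseteq> strop I"
    by (rule closure_minimal) (use sub2 in \<open>auto simp: strop_def\<close>)
  have "S \<subseteq> (\<Union>N\<in>{N. N > 0}. \<Union>P\<in>GL_R. \<Union>Q\<in>GL_R. trop_PQ I N P Q)"
  proof
    fix x assume "x \<in> S"
    then obtain N A where N: "N > 0" and van: "\<forall>f\<in>I. regext f A = 0" and sv: "is_sval N A x"
      unfolding S_def by blast
    then obtain M P Q z where M: "M > 0" and P: "P \<in> GL_R" and Q: "Q \<in> GL_R"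
      and z: "\<forall>i. z $ i \<noteq> 0" and eq: "lift_mat M A = P ** diagm z ** matrix_inv Q"
      and ms: "mset_vec x = image_mset (val_lvl (N * M)) (mset_vec z)"
      unfolding is_sval_def by blast
    have ms': "image_mset (\<lambda>i. x $ i) (mset_set UNIV) = image_mset (\<lambda>i. val_lvl (N * M) (z $ i)) (mset_set UNIV)"
      using ms unfolding mset_vec_def multiset.map_comp by (simp add: o_def)
    obtain \<sigma> where sp: "\<sigma> permutes UNIV" and xs: "\<forall>i\<in>UNIV. x $ i = val_lvl (N * M) (z $ (\<sigma> i))"
      using image_mset_eq_implies_permutes[OF finite_class.finite_UNIV ms'] by blast
    have b: "bij \<sigma>" using sp permutes_bij by blast
    define P' where "P' = P ** pmat \<sigma>"
    define Q' where "Q' = Q ** pmat \<sigma>"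
    define z' where "z' = (\<chi> i. z $ (\<sigma> i))"
    have gq: "Q ** matrix_inv Q = mat 1" "matrix_inv Q ** Q = mat 1"
      using GL_R_lift[of 1 Q, unfolded lift_mat_one_id] Q by auto
    have qi: "matrix_inv Q' = transpose (pmat \<sigma>) ** matrix_inv Q"
    proof (rule matrix_inv_eq)
      show "Q' ** (transpose (pmat \<sigma>) ** matrix_inv Q) = mat 1"
        unfolding Q'_def using b gq by (metis matrix_mul_assoc pmat_pt_assoc)
      show "transpose (pmat \<sigma>) ** matrix_inv Q ** Q' = mat 1"
        unfolding Q'_def using b gq by (metis matrix_mul_assoc matrix_mul_lid pmat_tp)
    qed
    have key: "P' ** diagm z' ** matrix_inv Q' = lift_mat M A"
      unfolding eq qi P'_def z'_def diag_perm[OF b, symmetric]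
      by (simp add: matrix_mul_assoc[symmetric] pmat_pt_assoc b)
    have c1: "\<forall>i. z' $ i \<noteq> 0" using z by (simp add: z'_def)
    have c2: "\<forall>f\<in>I. regext f (lift_mat 1 P' ** diagm z' ** matrix_inv (lift_mat 1 Q')) = 0"
      using van lift_0[OF M] by (simp only: lift_mat_one_id key regext_lift[OF M]) simp
    have c3: "\<forall>i. x $ i = val_lvl (N * M * 1) (z' $ i)" using xs by (simp add: z'_def)
    have "x \<in> trop_PQ I (N * M) P' Q'"
      unfolding trop_PQ_def
      apply (rule subsetD[OF closure_subset])
      apply (rule CollectI)
      apply (rule exI[of _ 1])
      apply (rule exI[of _ z'])
      using c1 c2 c3 by simp
    moreover have "P' \<in> GL_R" "Q' \<in> GL_R" using GL_R_perm P Q b by (auto simp: P'_def Q'_def)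
    ultimately show "x \<in> (\<Union>N\<in>{N. N > 0}. \<Union>P\<in>GL_R. \<Union>Q\<in>GL_R. trop_PQ I N P Q)"
    proof -
      have "N * M > 0" using N M by simp
      thus ?thesis using \<open>x \<in> trop_PQ I (N * M) P' Q'\<close> \<open>P' \<in> GL_R\<close> \<open>Q' \<in> GL_R\<close> by blast
    qed
  qed
  thus "strop I \<subseteq> closure (\<Union>N\<in>{N. N > 0}. \<Union>P\<in>GL_R. \<Union>Q\<in>GL_R. trop_PQ I N P Q)"
    unfolding strop_eq by (rule closure_mono)
qed

end
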